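(* Let $\mathbb{R}^n$ be endowed with the $\ell_1$ norm and $\mathbb{R}^m$ with the Euclidean norm $\|\cdot\|_2$. Let $f(u)=\frac12\langle Qu,u\rangle+\langle b,u\rangle$ with $b\in\mathbb{R}^m$ and $Q\in\mathbb{R}^{m\times m}$ symmetric positive definite. Then for every $A\in\mathbb{R}^{m\times n}$ with at least two different columns, \[ L_{f,A}=\frac{\mathrm{diam}(Q^{1/2}A)^2}{4},\qquad \mu_{f,A}=\frac{\Phi(Q^{1/2}A)^2}{4}, \] and in particular $\dfrac{L_{f,A}}{\mu_{f,A}}=\dfrac{\mathrm{diam}(Q^{1/2}A)^2}{\Phi(Q^{1/2}A)^2}$.
   Context: $\Delta_{n-1}=\{x\in\mathbb{R}^n_+ : \sum_i x_i=1\}$. A matrix $A\in\mathbb{R}^{m\times n}$ is also identified with the set of its columns; $\mathrm{conv}(A)=\{Ax:x\in\Delta_{n-1}\}$. For $u\in\mathrm{conv}(A)$, $Z(u)=\{z\in\Delta_{n-1}:Az=u\}$ and $\mathrm{dist}(x,Z(u))=\min_{z\in Z(u)}\|x-z\|_1$. For a differentiable convex $f$ with $\mathrm{conv}(A)\subseteq\mathrm{dom}(f)$ and $A$ having at least two different columns, the relative smoothness and strong convexity constants are \[ L_{f,A}=\sup_{u\in\mathrm{conv}(A),\,x\in\Delta_{n-1}\setminus Z(u)}\frac{2(f(Ax)-f(u)-\langle\nabla f(u),Ax-u\rangle)}{\mathrm{dist}(x,Z(u))^2}, \] and $\mu_{f,A}$ is the same expression with $\inf$ in place of $\sup$. For a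 matrix $B$ (set of columns), $\mathrm{diam}(B)=\sup_{u,w\in B}\|u-w\|_2$, and the facial distance is $\Phi(B)=\min\{\mathrm{dist}(F,\mathrm{conv}(B\setminus F)): F\text{ a face of }\mathrm{conv}(B),\ \emptyset\ne F\ne\mathrm{conv}(B)\}$, where $B\setminus F$ denotes the columns of $B$ not in $F$ and $\mathrm{dist}(F,G)=\inf_{u\in F,w\in G}\|u-w\|_2$. *)

theory Defs
  imports "HOL-Analysis.Analysis"
begin

definition stdsimplex :: "(real^'n) set" where
  "stdsimplex = {x. (\<forall>i. 0 \<le> x $ i) \<and> (\<Sum>i\<in>UNIV. x $ i) = 1}"

definition mconv :: "real^'n^'m \<Rightarrow> (real^'m) set" where
  "mconv A = {A *v x | x. x \<in> stdsimplex}"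

definition Zset :: "real^'n^'m \<Rightarrow> real^'m \<Rightarrow> (real^'n) set" where
  "Zset A u = {z \<in> stdsimplex. A *v z = u}"

definition l1norm :: "real^'n \<Rightarrow> real" where
  "l1norm x = (\<Sum>i\<in>UNIV. \<bar>x $ i\<bar>)"

definition l1dist :: "real^'n \<Rightarrow> (real^'n) set \<Rightarrow> real" where
  "l1dist x S = Inf {l1norm (x - z) | z. z \<in> S}"

text \<open>Bregman-type ratio appearing in L_{f,A} and mu_{f,A}; the gradient
  pairing is the Frechet derivative of f at u applied to Ax - u.\<close>
definition ratio_set :: "(real^'m \<Rightarrow> real) \<Rightarrow> real^'n^'m \<Rightarrow> real set" where
  "ratio_set f A = {2 * (f (A *v x) - f u - frechet_derivative f (at u) (A *v x - u))
                        / (l1dist x (Zset A u))^2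
                    | u x. u \<in> mconv A \<and> x \<in> stdsimplex - Zset A u}"

definition Lrel :: "(real^'m \<Rightarrow> real) \<Rightarrow> real^'n^'m \<Rightarrow> real" where
  "Lrel f A = Sup (ratio_set f A)"

definition murel :: "(real^'m \<Rightarrow> real) \<Rightarrow> real^'n^'m \<Rightarrow> real" where
  "murel f A = Inf (ratio_set f A)"

definition mdiam :: "real^'n^'m \<Rightarrow> real" where
  "mdiam B = diameter (columns B)"

definition facial_distance :: "real^'n^'m \<Rightarrow> real" where
  "facial_distance B = Inf {setdist F (convex hull {c \<in> columns B. c \<notin> F})
      | F. F face_of mconv B \<and> F \<noteq> {} \<and> F \<noteq> mconv B}"

definition sym_pos_def :: "real^'m^'m \<Rightarrow> bool" where
  "sym_pos_def Q \<longleftrightarrow> transpose Q = Q \<and> (\<forall>x. x \<noteq> 0 \<longrightarrow> (Q *v x) \<bullet> x > 0)"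

definition msqrt :: "real^'m^'m \<Rightarrow> real^'m^'m" where
  "msqrt Q = (THE S. transpose S = S \<and> (\<forall>x. 0 \<le> (S *v x) \<bullet> x) \<and> S ** S = Q)"

end

theory Submission
  imports Defs
begin


lemma symdot:
  fixes Q :: "real^'m^'m"
  assumes "transpose Q = Q"
  shows "(Q *v x) \<bullet> y = x \<bullet> (Q *v y)"
proof -
  have "x \<bullet> (Q *v y) = (x v* Q) \<bullet> y" by (simp add: dot_lmul_matrix)
  also have "x v* Q = transpose Q *v x" by simp
  also have "\<dots> = Q *v x" using assms by simp
  finally show ?thesis by simp
qed

lemma quad_lemma:
  fixes a c :: real
  assumes "\<And>t. 0 \<le> 2*t*a + t^2*c"
  shows "a = 0"
proof -
  have c: "0 \<le> c" using assms[of 1] assms[of "-1"] by simp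
  define t where "t = - a / (c+1)"
  have "0 \<le> (2*t*a + t^2*c) * (c+1)^2" using assms[of t] c by simp
  also have "(2*t*a + t^2*c) * (c+1)^2 = 2*a*(t*(c+1))*(c+1) + (t*(c+1))^2*c"
    by (simp add: algebra_simps power2_eq_square)
  also have "t*(c+1) = -a" using c by (simp add: t_def)
  also have "2*a*(-a)*(c+1) + (-a)^2*c = - (a^2) * (c + 2)"
    by (simp add: algebra_simps power2_eq_square)
  finally have "a^2 * (c+2) \<le> 0" by simp
  moreover have "0 \<le> a^2 * (c+2)" using c by simp
  ultimately have "a^2 * (c+2) = 0" by simp
  thus ?thesis using c by simp
qed

lemma eigvec_exists:
  fixes Q :: "real^'m^'m"
  assumes sym: "transpose Q = Q" and V: "subspace V" and inv: "\<And>x. x \<in> V \<Longrightarrow> Q *v x \<in> V"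
    and nz: "x0 \<in> V" "x0 \<noteq> 0"
  shows "\<exists>v\<in>V. norm v = 1 \<and> (\<exists>l. Q *v v = l *\<^sub>R v)"
proof -
  define K where "K = V \<inter> sphere 0 1"
  have "compact K" unfolding K_def using closed_subspace[OF V] compact_sphere
    by (simp add: closed_Int_compact)
  have "x0 /\<^sub>R norm x0 \<in> K" using nz V by (simp add: K_def subspace_scale)
  then have "K \<noteq> {}" by auto
  have "continuous_on K (\<lambda>x. (Q *v x) \<bullet> x)" by (intro continuous_intros)
  then obtain v where v: "v \<in> K" and vmax: "\<And>y. y \<in> K \<Longrightarrow> (Q *v y) \<bullet> y \<le> (Q *v v) \<bullet> v"
    using continuous_attains_sup[OF \<open>compact K\<close> \<open>K \<noteq> {}\<close>] by blast
  define l where "l = (Q *v v) \<bullet> v"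
  have vV: "v \<in> V" and vn: "norm v = 1" using v by (auto simp: K_def)
  have vv: "v \<bullet> v = 1" using vn by (simp add: dot_square_norm)
  have bound: "(Q *v y) \<bullet> y \<le> l * (y \<bullet> y)" if "y \<in> V" for y
  proof (cases "y = 0")
    case True then show ?thesis by simp
  next
    case False
    define y' where "y' = y /\<^sub>R norm y"
    have "y' \<in> K" using that False V by (simp add: K_def y'_def subspace_scale)
    hence "(Q *v y') \<bullet> y' \<le> l" using vmax l_def by auto
    moreover have "(Q *v y') \<bullet> y' = ((Q *v y) \<bullet> y) / (norm y)^2"
      by (simp add: y'_def matrix_vector_mult_scaleR power2_eq_square divide_inverse)
    moreover have "y \<bullet> y = (norm y)^2" by (simp add: power2_norm_eq_inner)
    ultimately show ?thesis using False by (simp add: divide_le_eq mult.commute)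
  qed
  define M where "M = (\<lambda>y. l *\<^sub>R y - Q *v y)"
  have key: "(M v) \<bullet> z = 0" if "z \<in> V" for z
  proof -
    have "0 \<le> 2*t*((M v) \<bullet> z) + t^2*((M z) \<bullet> z)" for t
    proof -
      have "v + t *\<^sub>R z \<in> V" using vV that V by (simp add: subspace_add subspace_scale)
      from bound[OF this] have "0 \<le> l * ((v + t *\<^sub>R z) \<bullet> (v + t *\<^sub>R z)) - (Q *v (v + t *\<^sub>R z)) \<bullet> (v + t *\<^sub>R z)" by simp
      also have "\<dots> = 2*t*((M v) \<bullet> z) + t^2*((M z) \<bullet> z)"
        using symdot[OF sym, of z v] vv l_def
        by (simp add: M_def matrix_vector_right_distrib matrix_vector_mult_scaleR inner_add_left inner_add_right
            inner_diff_left algebra_simps inner_commute power2_eq_square)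
      finally show ?thesis .
    qed
    thus ?thesis by (rule quad_lemma)
  qed
  have "M v \<in> V" using vV inv V by (simp add: M_def subspace_diff subspace_scale)
  from key[OF this] have "M v = 0" by simp
  hence "Q *v v = l *\<^sub>R v" by (simp add: M_def)
  thus ?thesis using vV vn by blast
qed

definition OE :: "real^'m^'m \<Rightarrow> (real^'m) set \<Rightarrow> bool" where
  "OE Q E \<longleftrightarrow> finite E \<and> pairwise orthogonal E \<and> (\<forall>e\<in>E. norm e = 1 \<and> (\<exists>l. Q *v e = l *\<^sub>R e))"

lemma OE_card:
  fixes Q :: "real^'m^'m"
  assumes "OE Q E" shows "card E < Suc CARD('m)"
proof -
  have "0 \<notin> E" using assms by (auto simp: OE_def)
  hence "independent E" using assms by (simp add: OE_def pairwise_orthogonal_independent)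
  from independent_bound[OF this] show ?thesis by simp
qed

lemma OE_coef:
  assumes "OE Q E" "e \<in> E"
  shows "e \<bullet> (\<Sum>e'\<in>E. c e' *\<^sub>R e') = c e"
proof -
  have fin: "finite E" using assms by (simp add: OE_def)
  have ee: "e \<bullet> e = 1" using assms by (simp add: OE_def dot_square_norm)
  have "e \<bullet> (\<Sum>e'\<in>E. c e' *\<^sub>R e') = (\<Sum>e'\<in>E. c e' * (e \<bullet> e'))"
    by (simp add: inner_sum_right)
  also have "\<dots> = c e * (e \<bullet> e) + (\<Sum>e'\<in>E - {e}. c e' * (e \<bullet> e'))"
    using fin assms(2) by (simp add: sum.remove)
  also have "(\<Sum>e'\<in>E - {e}. c e' * (e \<bullet> e')) = 0"
    using assms by (intro sum.neutral) (auto simp: OE_def pairwise_def orthogonal_def)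
  finally show ?thesis using ee by simp
qed

lemma OE_expand:
  fixes Q :: "real^'m^'m"
  assumes "OE Q E" "span E = UNIV"
  shows "x = (\<Sum>e\<in>E. (e \<bullet> x) *\<^sub>R e)"
proof -
  define y where "y = x - (\<Sum>e\<in>E. (e \<bullet> x) *\<^sub>R e)"
  have "orthogonal y e" if "e \<in> E" for e
    using OE_coef[OF assms(1) that, of "\<lambda>e. e \<bullet> x"] 
    by (simp add: y_def orthogonal_def inner_diff_left inner_diff_right inner_commute)
  hence "orthogonal y y" using assms(2) by (intro orthogonal_to_span[of y E]) auto
  hence "y = 0" by (simp add: orthogonal_def)
  thus ?thesis by (simp add: y_def)
qed

lemma OE_span:
  fixes Q :: "real^'m^'m"
  assumes sym: "transpose Q = Q" shows "\<exists>E. OE Q E \<and> span E = UNIV"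
proof -
  have "OE Q {}" by (simp add: OE_def)
  then obtain E where E: "OE Q E" and Emax: "\<And>E'. OE Q E' \<Longrightarrow> card E' \<le> card E"
    using ex_has_greatest_nat[of "OE Q" "{}" card "Suc CARD('m)"] OE_card by blast
  have "span E = UNIV"
  proof (rule ccontr)
    assume "span E \<noteq> UNIV"
    then obtain a where a: "a \<noteq> 0" "\<And>x. x \<in> span E \<Longrightarrow> a \<bullet> x = 0"
      using span_not_UNIV_orthogonal by blast
    define V where "V = {x. \<forall>e\<in>E. e \<bullet> x = 0}"
    have V: "subspace V" unfolding subspace_def V_def
      by (auto simp: inner_add_right)
    have inv: "Q *v x \<in> V" if "x \<in> V" for x
    proof -
      have "e \<bullet> (Q *v x) = 0" if "e \<in> E" for e
      proof -
        obtain l where "Q *v e = l *\<^sub>R e" using E \<open>e \<in> E\<close> by (auto simp: OE_def)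
        hence "e \<bullet> (Q *v x) = l * (e \<bullet> x)" using symdot[OF sym, of e x] by simp
        thus ?thesis using \<open>x \<in> V\<close> \<open>e \<in> E\<close> by (simp add: V_def)
      qed
      thus ?thesis by (simp add: V_def)
    qed
    have "a \<in> V" using a(2) by (auto simp: V_def span_base inner_commute)
    from eigvec_exists[OF sym V inv this a(1)] obtain v where
      v: "v \<in> V" "norm v = 1" "\<exists>l. Q *v v = l *\<^sub>R v" by blast
    have vE: "v \<notin> E"
    proof
      assume "v \<in> E" then have "v \<bullet> v = 0" using v(1) by (simp add: V_def)
      thus False using v(2) by simp
    qed
    have "OE Q (insert v E)"
      using E v unfolding OE_def
      by (auto simp: pairwise_insert orthogonal_def V_def inner_commute)
    from Emax[OF this] have "card (insert v E) \<le> card E" .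
    moreover have "card (insert v E) = Suc (card E)" using E vE by (simp add: OE_def)
    ultimately show False by simp
  qed
  thus ?thesis using E by blast
qed

lemma msqrt_props:
  fixes Q :: "real^'m^'m"
  assumes "sym_pos_def Q"
  shows "transpose (msqrt Q) = msqrt Q \<and> (\<forall>x. 0 \<le> (msqrt Q *v x) \<bullet> x) \<and> msqrt Q ** msqrt Q = Q"
proof -
  have sym: "transpose Q = Q" and pos: "\<And>x. x \<noteq> 0 \<Longrightarrow> (Q *v x) \<bullet> x > 0"
    using assms by (auto simp: sym_pos_def_def)
  obtain E where E: "OE Q E" and sp: "span E = UNIV" using OE_span[OF sym] by blast
  have fin: "finite E" using E by (simp add: OE_def)
  define lam where "lam e = (Q *v e) \<bullet> e" for e
  have Qe: "Q *v e = lam e *\<^sub>R e" if "e \<in> E" for e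
  proof -
    have "norm e = 1 \<and> (\<exists>l. Q *v e = l *\<^sub>R e)" using E that by (simp add: OE_def)
    then obtain l where l: "Q *v e = l *\<^sub>R e" and n: "norm e = 1" by blast
    have "lam e = l" using n by (simp add: lam_def l dot_square_norm)
    thus ?thesis using l by simp
  qed
  have lpos: "lam e > 0" if "e \<in> E" for e
  proof -
    have "e \<noteq> 0" using E that by (auto simp: OE_def)
    thus ?thesis using pos by (simp add: lam_def)
  qed
  have Qx: "Q *v x = (\<Sum>e\<in>E. (lam e * (e \<bullet> x)) *\<^sub>R e)" for x
  proof -
    have "Q *v x = Q *v (\<Sum>e\<in>E. (e \<bullet> x) *\<^sub>R e)" using OE_expand[OF E sp, of x] by simp
    also have "\<dots> = (\<Sum>e\<in>E. (e \<bullet> x) *\<^sub>R (Q *v e))" by (simp add: vec.sum matrix_vector_mult_scaleR)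
    also have "\<dots> = (\<Sum>e\<in>E. (lam e * (e \<bullet> x)) *\<^sub>R e)" by (intro sum.cong) (auto simp: Qe)
    finally show ?thesis .
  qed
  define S :: "real^'m^'m" where "S = (\<chi> i j. \<Sum>e\<in>E. sqrt (lam e) * e$i * e$j)"
  have Sx: "S *v x = (\<Sum>e\<in>E. (sqrt (lam e) * (e \<bullet> x)) *\<^sub>R e)" for x
  proof -
    have "(S *v x)$i = (\<Sum>e\<in>E. (sqrt (lam e) * (e \<bullet> x)) *\<^sub>R e)$i" for i
    proof -
      have "(S *v x)$i = (\<Sum>j\<in>UNIV. \<Sum>e\<in>E. sqrt (lam e) * e$i * e$j * x$j)"
        by (simp add: S_def matrix_vector_mult_def sum_distrib_right)
      also have "\<dots> = (\<Sum>e\<in>E. \<Sum>j\<in>UNIV. sqrt (lam e) * e$i * e$j * x$j)"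
        by (rule sum.swap)
      also have "\<dots> = (\<Sum>e\<in>E. (sqrt (lam e) * (e \<bullet> x)) *\<^sub>R e)$i"
        by (simp add: sum_component inner_vec_def sum_distrib_left mult_ac)
      finally show ?thesis .
    qed
    thus ?thesis by (simp add: vec_eq_iff)
  qed
  have St: "transpose S = S" by (simp add: S_def transpose_def vec_eq_iff mult_ac)
  have Spsd: "0 \<le> (S *v x) \<bullet> x" for x
  proof -
    have "(S *v x) \<bullet> x = (\<Sum>e\<in>E. sqrt (lam e) * ((e \<bullet> x) * (e \<bullet> x)))"
      by (simp add: Sx inner_sum_left inner_sum_right mult_ac inner_commute)
    also have "\<dots> \<ge> 0" using lpos by (intro sum_nonneg) (simp add: less_imp_le)
    finally show ?thesis .
  qed
  have SS: "S ** S = Q"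
  proof (subst matrix_eq, intro allI)
    fix x
    have "(S ** S) *v x = S *v (S *v x)" by (simp add: matrix_vector_mul_assoc)
    also have "\<dots> = (\<Sum>e\<in>E. (sqrt (lam e) * (e \<bullet> (S *v x))) *\<^sub>R e)" by (rule Sx)
    also have "\<dots> = (\<Sum>e\<in>E. (lam e * (e \<bullet> x)) *\<^sub>R e)"
    proof (intro sum.cong refl)
      fix e assume e: "e \<in> E"
      have "e \<bullet> (S *v x) = sqrt (lam e) * (e \<bullet> x)"
        unfolding Sx by (rule OE_coef[OF E e])
      thus "(sqrt (lam e) * (e \<bullet> (S *v x))) *\<^sub>R e = (lam e * (e \<bullet> x)) *\<^sub>R e"
        using lpos[OF e] by (simp add: mult.assoc[symmetric] less_imp_le)
    qed
    also have "\<dots> = Q *v x" by (simp add: Qx)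
    finally show "(S ** S) *v x = Q *v x" .
  qed
  have uniq: "T = S" if T: "transpose T = T" "\<forall>x. 0 \<le> (T *v x) \<bullet> x" "T ** T = Q" for T
  proof -
    have Te: "T *v e = sqrt (lam e) *\<^sub>R e" if e: "e \<in> E" for e
    proof -
      define s where "s = sqrt (lam e)"
      have s: "s > 0" "s * s = lam e" using lpos[OF e] by (auto simp: s_def)
      define y where "y = T *v e - s *\<^sub>R e"
      have "T *v y = T *v (T *v e) - s *\<^sub>R (T *v e)"
        by (simp add: y_def matrix_vector_right_distrib matrix_vector_mult_diff_distrib matrix_vector_mult_scaleR)
      also have "T *v (T *v e) = Q *v e" using T(3) by (simp add: matrix_vector_mul_assoc)
      also have "\<dots> = (s * s) *\<^sub>R e" using Qe[OF e] s by simp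
      finally have "T *v y = - s *\<^sub>R y" by (simp add: y_def algebra_simps)
      hence "(T *v y) \<bullet> y = - s * (y \<bullet> y)" by simp
      moreover have "0 \<le> (T *v y) \<bullet> y" using T(2) by blast
      ultimately have "s * (y \<bullet> y) \<le> 0" by linarith
      hence "y \<bullet> y \<le> 0" using s(1) by (simp add: mult_le_0_iff)
      hence "y \<bullet> y = 0" using inner_ge_zero[of y] by linarith
      hence "y = 0" by simp
      thus ?thesis by (simp add: y_def s_def)
    qed
    show ?thesis
    proof (subst matrix_eq, intro allI)
      fix x
      have "T *v x = T *v (\<Sum>e\<in>E. (e \<bullet> x) *\<^sub>R e)" using OE_expand[OF E sp, of x] by simp
      also have "\<dots> = (\<Sum>e\<in>E. (e \<bullet> x) *\<^sub>R (T *v e))" by (simp add: vec.sum matrix_vector_mult_scaleR)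
      also have "\<dots> = (\<Sum>e\<in>E. (sqrt (lam e) * (e \<bullet> x)) *\<^sub>R e)" by (intro sum.cong) (auto simp: Te)
      also have "\<dots> = S *v x" by (simp add: Sx)
      finally show "T *v x = S *v x" .
    qed
  qed
  have "msqrt Q = S" unfolding msqrt_def
  proof (rule the_equality)
    show "transpose S = S \<and> (\<forall>x. 0 \<le> (S *v x) \<bullet> x) \<and> S ** S = Q" using St Spsd SS by blast
  next
    fix T assume "transpose T = T \<and> (\<forall>x. 0 \<le> (T *v x) \<bullet> x) \<and> T ** T = Q"
    then show "T = S" using uniq by blast
  qed
  thus ?thesis using St Spsd SS by simp
qed



lemma Bsum: "(B::real^'n^'m) *v x = (\<Sum>i\<in>UNIV. x$i *\<^sub>R column i B)"
  by (simp add: matrix_mult_sum scalar_mult_eq_scaleR)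

lemma simplex_nonneg: "x \<in> stdsimplex \<Longrightarrow> 0 \<le> x$i"
  by (simp add: stdsimplex_def)

lemma simplex_sum: "x \<in> stdsimplex \<Longrightarrow> (\<Sum>i\<in>UNIV. x$i) = 1"
  by (simp add: stdsimplex_def)

lemma simplexI: "(\<And>i. 0 \<le> x$i) \<Longrightarrow> (\<Sum>i\<in>UNIV. x$i) = 1 \<Longrightarrow> x \<in> stdsimplex"
  by (simp add: stdsimplex_def)

lemma axis_simplex: "(axis i 1 :: real^'n) \<in> stdsimplex"
  by (simp add: stdsimplex_def axis_def)

lemma convex_stdsimplex: "convex (stdsimplex :: (real^'n) set)"
  unfolding convex_def
proof (intro ballI allI impI)
  fix x y :: "real^'n" and u v :: real
  assume x: "x \<in> stdsimplex" and y: "y \<in> stdsimplex" and uv: "0 \<le> u" "0 \<le> v" "u + v = 1"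
  show "u *\<^sub>R x + v *\<^sub>R y \<in> stdsimplex"
  proof (rule simplexI)
    fix i show "0 \<le> (u *\<^sub>R x + v *\<^sub>R y) $ i"
      using simplex_nonneg[OF x, of i] simplex_nonneg[OF y, of i] uv by simp
  next
    show "(\<Sum>i\<in>UNIV. (u *\<^sub>R x + v *\<^sub>R y) $ i) = 1"
      using simplex_sum[OF x] simplex_sum[OF y] uv
      by (simp add: sum.distrib sum_distrib_left[symmetric])
  qed
qed

lemma columns_range: "columns B = range (\<lambda>i. column i B)"
  by (auto simp: columns_def)

lemma finite_columns: "finite (columns (B::real^'n^'m))"
  by (simp add: columns_range)

lemma column_in_mconv: "column i B \<in> mconv B"
  unfolding mconv_def by (rule CollectI, rule exI[of _ "axis i 1"]) (simp add: matrix_vector_mult_basis axis_simplex)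

lemma mconv_image: "mconv B = (\<lambda>x. B *v x) ` stdsimplex"
  by (auto simp: mconv_def)

lemma convex_mconv: "convex (mconv (B::real^'n^'m))"
  unfolding mconv_image by (intro convex_linear_image convex_stdsimplex) simp

lemma mconv_hull: "mconv (B::real^'n^'m) = convex hull (columns B)"
proof
  show "mconv B \<subseteq> convex hull (columns B)"
  proof
    fix w assume "w \<in> mconv B"
    then obtain x where x: "x \<in> stdsimplex" "w = B *v x" by (auto simp: mconv_def)
    have "(\<Sum>i\<in>UNIV. x$i *\<^sub>R column i B) \<in> convex hull (columns B)"
      using simplex_sum[OF x(1)] simplex_nonneg[OF x(1)]
      by (intro convex_sum) (auto simp: columns_range hull_inc)
    thus "w \<in> convex hull (columns B)" using x by (simp add: Bsum)
  qed
next
  show "convex hull (columns B) \<subseteq> mconv B"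
    by (intro hull_minimal convex_mconv) (auto simp: columns_range column_in_mconv)
qed

lemma compact_mconv: "compact (mconv (B::real^'n^'m))"
  by (simp add: mconv_hull finite_imp_compact_convex_hull finite_columns)

lemma l1_le2:
  assumes "x \<in> stdsimplex" "z \<in> stdsimplex"
  shows "l1norm (x - z) \<le> 2"
proof -
  have "l1norm (x - z) \<le> (\<Sum>i\<in>UNIV. x$i + z$i)"
    unfolding l1norm_def using simplex_nonneg[OF assms(1)] simplex_nonneg[OF assms(2)]
    by (intro sum_mono) (simp add: abs_le_iff)
  also have "\<dots> = 2" using simplex_sum[OF assms(1)] simplex_sum[OF assms(2)] by (simp add: sum.distrib)
  finally show ?thesis .
qed

lemma l1norm_pos: "x \<noteq> z \<Longrightarrow> 0 < l1norm (x - z)"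
proof -
  assume "x \<noteq> z"
  then obtain i where "x$i \<noteq> z$i" by (auto simp: vec_eq_iff)
  hence "0 < \<bar>(x - z)$i\<bar>" by simp
  also have "\<dots> \<le> l1norm (x - z)" unfolding l1norm_def
    by (rule member_le_sum) auto
  finally show ?thesis .
qed

lemma closed_stdsimplex: "closed (stdsimplex :: (real^'n) set)"
proof -
  have "stdsimplex = (\<Inter>i. {x::real^'n. 0 \<le> x$i}) \<inter> {x. (\<Sum>i\<in>UNIV. x$i) = 1}"
    by (auto simp: stdsimplex_def)
  also have "closed \<dots>"
    by (intro closed_Int closed_INT ballI closed_Collect_le closed_Collect_eq continuous_intros)
  finally show ?thesis .
qed

lemma bounded_stdsimplex: "bounded (stdsimplex :: (real^'n) set)"
proof -
  have "stdsimplex \<subseteq> cball (0::real^'n) 1"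
  proof
    fix x :: "real^'n" assume x: "x \<in> stdsimplex"
    have "norm x \<le> (\<Sum>i\<in>UNIV. \<bar>x$i\<bar>)" by (rule norm_le_l1_cart)
    also have "\<dots> = 1" using simplex_sum[OF x] simplex_nonneg[OF x] by simp
    finally show "x \<in> cball 0 1" by simp
  qed
  thus ?thesis using bounded_cball bounded_subset by blast
qed

lemma compact_Zset: "compact (Zset (B::real^'n^'m) w)"
proof -
  have "Zset B w = stdsimplex \<inter> {z. B *v z = w}" by (auto simp: Zset_def)
  moreover have "closed {z. B *v z = w}"
    by (intro closed_Collect_eq continuous_intros matrix_vector_mult_linear_continuous_on)
  ultimately show ?thesis
    using closed_stdsimplex bounded_stdsimplex
    by (metis bounded_Int closed_Int compact_eq_bounded_closed)
qed

lemma l1dist_attain: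
  fixes B :: "real^'n^'m"
  assumes "w \<in> mconv B"
  shows "\<exists>z\<in>Zset B w. l1dist x (Zset B w) = l1norm (x - z) \<and> (\<forall>z'\<in>Zset B w. l1norm (x - z) \<le> l1norm (x - z'))"
proof -
  have ne: "Zset B w \<noteq> {}" using assms by (auto simp: mconv_def Zset_def)
  have "continuous_on (Zset B w) (\<lambda>z. l1norm (x - z))"
    unfolding l1norm_def by (intro continuous_intros)
  then obtain z where z: "z \<in> Zset B w" "\<And>z'. z' \<in> Zset B w \<Longrightarrow> l1norm (x - z) \<le> l1norm (x - z')"
    using continuous_attains_inf[OF compact_Zset ne] by blast
  have "l1dist x (Zset B w) = l1norm (x - z)"
    unfolding l1dist_def using z by (intro cInf_eq_minimum) auto
  thus ?thesis using z by blast
qed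

lemma decomp:
  assumes x: "x \<in> stdsimplex" and z: "z \<in> stdsimplex" and xz: "x \<noteq> z"
  shows "\<exists>t a b. 0 < t \<and> a \<in> stdsimplex \<and> b \<in> stdsimplex \<and> x - z = t *\<^sub>R (a - b)
    \<and> l1norm (x - z) = 2 * t \<and> (\<forall>i. t * a$i \<le> x$i)"
proof -
  define P where "P i = max ((x - z)$i) 0" for i
  define N where "N i = max (- (x - z)$i) 0" for i
  define t where "t = (\<Sum>i\<in>UNIV. P i)"
  have PN: "(x - z)$i = P i - N i" "\<bar>(x - z)$i\<bar> = P i + N i" "0 \<le> P i" "0 \<le> N i" for i
    by (auto simp: P_def N_def)
  have "0 = (\<Sum>i\<in>UNIV. (x - z)$i)" using simplex_sum[OF x] simplex_sum[OF z] by (simp add: sum_subtractf)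
  also have "\<dots> = (\<Sum>i\<in>UNIV. P i - N i)" using PN(1) by simp
  also have "\<dots> = t - (\<Sum>i\<in>UNIV. N i)" by (simp add: sum_subtractf t_def)
  finally have sN: "(\<Sum>i\<in>UNIV. N i) = t" by simp
  have "l1norm (x - z) = (\<Sum>i\<in>UNIV. P i + N i)" unfolding l1norm_def
    by (intro sum.cong refl) (rule PN(2))
  hence l1: "l1norm (x - z) = 2 * t" using sN by (simp add: sum.distrib t_def)
  have tpos: "0 < t"
  proof (rule ccontr)
    assume "\<not> 0 < t"
    moreover have "0 \<le> t" unfolding t_def using PN(3) by (simp add: sum_nonneg)
    ultimately have "t = 0" by simp
    hence "\<forall>i\<in>UNIV. P i = 0" "\<forall>i\<in>UNIV. N i = 0" using sN PN(3,4) unfolding t_def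
      by (simp_all add: sum_nonneg_eq_0_iff)
    hence "x = z" using PN(1) by (auto simp: vec_eq_iff)
    thus False using xz by simp
  qed
  define a where "a = (\<chi> i. P i / t)"
  define b where "b = (\<chi> i. N i / t)"
  have "a \<in> stdsimplex" unfolding a_def using tpos PN(3)
    by (intro simplexI) (auto simp: sum_divide_distrib[symmetric] t_def)
  moreover have "b \<in> stdsimplex" unfolding b_def using tpos PN(4) sN
    by (intro simplexI) (auto simp: sum_divide_distrib[symmetric])
  moreover have "x - z = t *\<^sub>R (a - b)"
  proof -
    have "(x - z)$i = (t *\<^sub>R (a - b))$i" for i
    proof -
      have "(t *\<^sub>R (a - b))$i = t * (P i / t - N i / t)" by (simp add: a_def b_def)
      also have "\<dots> = P i - N i" using tpos by (simp add: field_simps)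
      also have "\<dots> = (x - z)$i" using PN(1)[of i] by simp
      finally show ?thesis by simp
    qed
    thus ?thesis by (simp add: vec_eq_iff)
  qed
  moreover have "t * a$i \<le> x$i" for i
    using tpos simplex_nonneg[OF x, of i] simplex_nonneg[OF z, of i] by (simp add: a_def P_def)
  ultimately show ?thesis using tpos l1 by blast
qed



lemma simplex_combo_bound:
  fixes v :: "'n::finite \<Rightarrow> 'a::real_normed_vector"
  assumes y: "y \<in> stdsimplex" and D: "\<And>i. norm (v i) \<le> D"
  shows "norm (\<Sum>i\<in>UNIV. y$i *\<^sub>R v i) \<le> D"
proof -
  have "norm (\<Sum>i\<in>UNIV. y$i *\<^sub>R v i) \<le> (\<Sum>i\<in>UNIV. norm (y$i *\<^sub>R v i))" by (rule norm_sum)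
  also have "\<dots> = (\<Sum>i\<in>UNIV. y$i * norm (v i))" using simplex_nonneg[OF y] by simp
  also have "\<dots> \<le> (\<Sum>i\<in>UNIV. y$i * D)"
    using simplex_nonneg[OF y] D by (intro sum_mono mult_left_mono) auto
  also have "\<dots> = D" using simplex_sum[OF y] by (simp add: sum_distrib_right[symmetric])
  finally show ?thesis .
qed

lemma simplex_diff:
  fixes v :: "'n::finite \<Rightarrow> 'a::real_vector"
  assumes y: "y \<in> stdsimplex"
  shows "c - (\<Sum>i\<in>UNIV. y$i *\<^sub>R v i) = (\<Sum>i\<in>UNIV. y$i *\<^sub>R (c - v i))"
proof -
  have "(\<Sum>i\<in>UNIV. y$i *\<^sub>R (c - v i)) = (\<Sum>i\<in>UNIV. y$i) *\<^sub>R c - (\<Sum>i\<in>UNIV. y$i *\<^sub>R v i)"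
    by (simp add: scaleR_diff_right sum_subtractf scaleR_sum_left)
  thus ?thesis using simplex_sum[OF y] by simp
qed

lemma col_dist_le: "norm (column i B - column j (B::real^'n^'m)) \<le> mdiam B"
proof -
  have "bounded (columns B)" by (simp add: finite_imp_bounded finite_columns)
  from diameter_bounded_bound[OF this, of "column i B" "column j B"]
  show ?thesis by (simp add: mdiam_def columns_range dist_norm)
qed

lemma diam_bound:
  fixes B :: "real^'n^'m"
  assumes a: "a \<in> stdsimplex" and b: "b \<in> stdsimplex"
  shows "norm (B *v a - B *v b) \<le> mdiam B"
proof -
  have cb: "norm (column i B - B *v b) \<le> mdiam B" for i
  proof -
    have "column i B - B *v b = (\<Sum>j\<in>UNIV. b$j *\<^sub>R (column i B - column j B))"
      unfolding Bsum[of B b] by (rule simplex_diff[OF b])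
    also have "norm \<dots> \<le> mdiam B" by (rule simplex_combo_bound[OF b col_dist_le])
    finally show ?thesis .
  qed
  have "B *v b - B *v a = (\<Sum>i\<in>UNIV. a$i *\<^sub>R (B *v b - column i B))"
    unfolding Bsum[of B a] by (rule simplex_diff[OF a])
  also have "norm \<dots> \<le> mdiam B" using cb by (intro simplex_combo_bound[OF a]) (simp add: norm_minus_commute)
  finally show ?thesis by (simp add: norm_minus_commute)
qed

definition Rset :: "real^'n^'m \<Rightarrow> real set" where
  "Rset B = {(norm (B *v x - w))^2 / (l1dist x (Zset B w))^2 | w x. w \<in> mconv B \<and> x \<in> stdsimplex - Zset B w}"

lemma R_elem:
  fixes B :: "real^'n^'m"
  assumes w: "w \<in> mconv B" and x: "x \<in> stdsimplex" "x \<notin> Zset B w"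
  shows "\<exists>z t a b. z \<in> Zset B w \<and> (\<forall>z'\<in>Zset B w. l1norm (x - z) \<le> l1norm (x - z'))
     \<and> l1dist x (Zset B w) = 2 * t \<and> l1norm (x - z) = 2 * t \<and> 0 < t \<and> a \<in> stdsimplex \<and> b \<in> stdsimplex
     \<and> x - z = t *\<^sub>R (a - b) \<and> B *v x - w = t *\<^sub>R (B *v a - B *v b) \<and> (\<forall>i. t * a$i \<le> x$i)"
proof -
  obtain z where z: "z \<in> Zset B w" "l1dist x (Zset B w) = l1norm (x - z)"
    "\<forall>z'\<in>Zset B w. l1norm (x - z) \<le> l1norm (x - z')"
    using l1dist_attain[OF w] by blast
  have zs: "z \<in> stdsimplex" "B *v z = w" using z(1) by (auto simp: Zset_def)
  have "x \<noteq> z" using x(2) z(1) by auto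
  from decomp[OF x(1) zs(1) this] obtain t a b where
    tab: "0 < t" "a \<in> stdsimplex" "b \<in> stdsimplex" "x - z = t *\<^sub>R (a - b)"
      "l1norm (x - z) = 2 * t" "\<forall>i. t * a$i \<le> x$i" by blast
  have "B *v x - w = B *v (x - z)" using zs by (simp add: matrix_vector_mult_diff_distrib)
  also have "\<dots> = t *\<^sub>R (B *v a - B *v b)"
    by (simp add: tab(4) matrix_vector_mult_scaleR matrix_vector_mult_diff_distrib)
  finally show ?thesis using z zs tab by metis
qed

lemma R_upper:
  fixes B :: "real^'n^'m"
  assumes "r \<in> Rset B"
  shows "r \<le> (mdiam B)^2 / 4"
proof -
  obtain w x where wx: "w \<in> mconv B" "x \<in> stdsimplex" "x \<notin> Zset B w"
    and r: "r = (norm (B *v x - w))^2 / (l1dist x (Zset B w))^2"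
    using assms by (auto simp: Rset_def)
  from R_elem[OF wx] obtain z t a b where
    e: "l1dist x (Zset B w) = 2 * t" "0 < t" "a \<in> stdsimplex" "b \<in> stdsimplex"
       "B *v x - w = t *\<^sub>R (B *v a - B *v b)" by blast
  have "r = (t * norm (B *v a - B *v b))^2 / (2*t)^2" using e(2) by (simp add: r e(1) e(5))
  also have "\<dots> = (norm (B *v a - B *v b))^2 / 4" using e(2) by (simp add: power_mult_distrib)
  also have "\<dots> \<le> (mdiam B)^2 / 4"
    using diam_bound[OF e(3,4)] by (intro divide_right_mono power_mono) auto
  finally show ?thesis .
qed

lemma R_nonneg: "r \<in> Rset B \<Longrightarrow> 0 \<le> r"
  by (auto simp: Rset_def)

lemma R_attain:
  fixes B :: "real^'n^'m"
  assumes "\<exists>i j. column i B \<noteq> column j B"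
  shows "(mdiam B)^2 / 4 \<in> Rset B"
proof -
  have "compact (columns B)" "columns B \<noteq> {}" by (auto simp: finite_imp_compact finite_columns columns_range)
  from diameter_compact_attained[OF this] obtain c d where
    cd: "c \<in> columns B" "d \<in> columns B" "dist c d = mdiam B" by (auto simp: mdiam_def)
  obtain i j where ij: "c = column i B" "d = column j B" using cd by (auto simp: columns_range)
  obtain i0 j0 where "column i0 B \<noteq> column j0 B" using assms by blast
  hence "0 < norm (column i0 B - column j0 B)" by simp
  also have "\<dots> \<le> mdiam B" by (rule col_dist_le)
  finally have Dpos: "0 < mdiam B" .
  hence cdne: "column i B \<noteq> column j B" using cd ij by auto
  define w where "w = column j B"
  define x :: "real^'n" where "x = axis i 1"
  have w: "w \<in> mconv B" by (simp add: w_def column_in_mconv)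
  have Bx: "B *v x = column i B" by (simp add: x_def matrix_vector_mult_basis)
  have x: "x \<in> stdsimplex" "x \<notin> Zset B w" using cdne using Bx by (auto simp: x_def axis_simplex Zset_def w_def)
  from R_elem[OF w x] obtain z t a b where
    e: "z \<in> Zset B w" "\<forall>z'\<in>Zset B w. l1norm (x - z) \<le> l1norm (x - z')"
       "l1dist x (Zset B w) = 2 * t" "0 < t" by blast
  have "l1dist x (Zset B w) \<le> 2"
  proof -
    obtain z0 where "z0 \<in> Zset B w" "l1dist x (Zset B w) = l1norm (x - z0)"
      using l1dist_attain[OF w] by blast
    thus ?thesis using l1_le2[OF x(1)] by (auto simp: Zset_def)
  qed
  hence t1: "t \<le> 1" using e(3) by simp
  define r where "r = (norm (B *v x - w))^2 / (l1dist x (Zset B w))^2"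
  have rR: "r \<in> Rset B" unfolding Rset_def r_def using w x by blast
  have "norm (B *v x - w) = mdiam B" using cd ij by (simp add: Bx w_def dist_norm)
  hence "r = (mdiam B)^2 / (2*t)^2" by (simp add: r_def e(3))
  also have "\<dots> \<ge> (mdiam B)^2 / 4"
  proof (rule divide_left_mono)
    show "(2*t)^2 \<le> 4" using t1 e(4) by (simp add: power_mult_distrib) (metis power_le_one less_imp_le one_power2 power2_eq_square mult_le_one)
  qed (use e(4) in auto)
  finally have "(mdiam B)^2 / 4 \<le> r" .
  moreover have "r \<le> (mdiam B)^2 / 4" by (rule R_upper[OF rR])
  ultimately have "r = (mdiam B)^2 / 4" by linarith
  thus ?thesis using rR by metis
qed

lemma Sup_R:
  fixes B :: "real^'n^'m"
  assumes "\<exists>i j. column i B \<noteq> column j B"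
  shows "Sup (Rset B) = (mdiam B)^2 / 4"
  using R_attain[OF assms] R_upper by (intro cSup_eq_maximum) auto



lemma shrink_ext:
  fixes p y :: "'a::real_vector"
  assumes "convex P" "p \<in> P" "p + d *\<^sub>R (p - y) \<in> P" "0 < d'" "d' \<le> d"
  shows "p + d' *\<^sub>R (p - y) \<in> P"
proof -
  have d: "0 < d" using assms by simp
  have "(1 - d'/d) *\<^sub>R p + (d'/d) *\<^sub>R (p + d *\<^sub>R (p - y)) \<in> P"
    using assms d by (intro convexD) (auto simp: field_simps)
  also have "(1 - d'/d) *\<^sub>R p + (d'/d) *\<^sub>R (p + d *\<^sub>R (p - y)) = p + d' *\<^sub>R (p - y)"
    using d by (simp add: algebra_simps)
  finally show ?thesis .
qed

lemma ext_face_one: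
  fixes p :: "'a::real_vector"
  assumes P: "convex P" "p \<in> P"
    and F: "F = {y\<in>P. \<exists>d>0. p + d *\<^sub>R (p - y) \<in> P}"
    and ab: "a \<in> P" "b \<in> P" and y: "y \<in> F" "y \<in> open_segment a b"
  shows "a \<in> F"
proof -
  obtain th where th: "0 < th" "th < 1" "y = (1 - th) *\<^sub>R a + th *\<^sub>R b"
    using y(2) by (auto simp: in_segment)
  obtain d where d: "0 < d" "p + d *\<^sub>R (p - y) \<in> P" using y(1) F by auto
  define k where "k = 1 + d * th"
  have "0 < d * th" using d th by simp
  hence k: "0 < k" by (simp add: k_def)
  define mu where "mu = 1 / k"
  define d' where "d' = d * (1 - th) / k"
  have d': "0 < d'" using d th k by (simp add: d'_def)
  define q where "q = p + d *\<^sub>R (p - y)"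
  have q: "q = (1 + d) *\<^sub>R p - (d * (1 - th)) *\<^sub>R a - (d * th) *\<^sub>R b"
    by (simp add: q_def th(3) algebra_simps)
  have c1: "mu * (1 + d) = 1 + d'" using k by (simp add: mu_def d'_def k_def field_simps)
  have c2: "mu * (d * (1 - th)) = d'" using k by (simp add: mu_def d'_def)
  have c3: "(1 - mu) - mu * (d * th) = 0" using k by (simp add: mu_def k_def field_simps)
  have "mu *\<^sub>R q + (1 - mu) *\<^sub>R b
      = (mu * (1 + d)) *\<^sub>R p - (mu * (d * (1 - th))) *\<^sub>R a + ((1 - mu) - mu * (d * th)) *\<^sub>R b"
    by (simp add: q algebra_simps)
  also have "\<dots> = (1 + d') *\<^sub>R p - d' *\<^sub>R a + 0 *\<^sub>R b" by (simp only: c1 c2 c3)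
  also have "\<dots> = p + d' *\<^sub>R (p - a)" by (simp add: algebra_simps)
  finally have eq: "mu *\<^sub>R q + (1 - mu) *\<^sub>R b = p + d' *\<^sub>R (p - a)" .
  have mu: "0 \<le> mu" "mu \<le> 1" using k d th by (auto simp: mu_def k_def)
  have "mu *\<^sub>R q + (1 - mu) *\<^sub>R b \<in> P"
    using d(2) ab mu P(1) by (intro convexD) (auto simp: q_def)
  hence "p + d' *\<^sub>R (p - a) \<in> P" by (simp add: eq)
  thus ?thesis using F ab d' by auto
qed

lemma ext_face:
  fixes p :: "'a::real_vector"
  assumes P: "convex P" "p \<in> P"
  shows "{y\<in>P. \<exists>d>0. p + d *\<^sub>R (p - y) \<in> P} face_of P"
proof -
  define F where "F = {y\<in>P. \<exists>d>0. p + d *\<^sub>R (p - y) \<in> P}"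
  have "convex F"
    unfolding convex_def
  proof (intro ballI allI impI)
    fix y1 y2 u v assume y: "y1 \<in> F" "y2 \<in> F" and uv: "0 \<le> (u::real)" "0 \<le> v" "u + v = 1"
    obtain d1 where d1: "0 < d1" "p + d1 *\<^sub>R (p - y1) \<in> P" using y(1) by (auto simp: F_def)
    obtain d2 where d2: "0 < d2" "p + d2 *\<^sub>R (p - y2) \<in> P" using y(2) by (auto simp: F_def)
    define d where "d = min d1 d2"
    have q1: "p + d *\<^sub>R (p - y1) \<in> P" using shrink_ext[OF P d1(2)] d1 d2 by (simp add: d_def)
    have q2: "p + d *\<^sub>R (p - y2) \<in> P" using shrink_ext[OF P d2(2)] d1 d2 by (simp add: d_def)
    have "u *\<^sub>R (p + d *\<^sub>R (p - y1)) + v *\<^sub>R (p + d *\<^sub>R (p - y2)) \<in> P"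
      using q1 q2 uv P(1) by (intro convexD) auto
    also have "u *\<^sub>R (p + d *\<^sub>R (p - y1)) + v *\<^sub>R (p + d *\<^sub>R (p - y2))
       = (u + v) *\<^sub>R p + d *\<^sub>R ((u + v) *\<^sub>R p - (u *\<^sub>R y1 + v *\<^sub>R y2))"
      by (simp add: algebra_simps)
    finally have "p + d *\<^sub>R (p - (u *\<^sub>R y1 + v *\<^sub>R y2)) \<in> P" using uv by simp
    moreover have "u *\<^sub>R y1 + v *\<^sub>R y2 \<in> P" using y uv P(1) by (intro convexD) (auto simp: F_def)
    moreover have "0 < d" using d1 d2 by (simp add: d_def)
    ultimately show "u *\<^sub>R y1 + v *\<^sub>R y2 \<in> F" by (auto simp: F_def)
  qed
  moreover have "F \<subseteq> P" by (auto simp: F_def)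
  moreover have "a \<in> F \<and> b \<in> F" if "a \<in> P" "b \<in> P" "y \<in> F" "y \<in> open_segment a b" for a b y
    using ext_face_one[OF P F_def that] ext_face_one[OF P F_def that(2,1,3)] that(4)
    by (simp add: open_segment_commute)
  ultimately show ?thesis unfolding face_of_def F_def[symmetric] by blast
qed



lemma face_support:
  fixes B :: "real^'n^'m"
  assumes F: "F face_of mconv B" and z: "z \<in> stdsimplex" "B *v z \<in> F" and zi: "0 < z$i"
  shows "column i B \<in> F"
proof (cases "z$i = 1")
  case True
  have "(\<Sum>k\<in>UNIV. z$k) = z$i + (\<Sum>k\<in>UNIV-{i}. z$k)" by (simp add: sum.remove)
  hence "(\<Sum>k\<in>UNIV-{i}. z$k) = 0" using simplex_sum[OF z(1)] True by simp
  hence "\<forall>k\<in>UNIV-{i}. z$k = 0" using simplex_nonneg[OF z(1)] by (simp add: sum_nonneg_eq_0_iff)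
  hence "z = axis i 1" using True by (auto simp: vec_eq_iff axis_def)
  thus ?thesis using z(2) by (simp add: matrix_vector_mult_basis)
next
  case False
  define th where "th = z$i"
  have "z$i \<le> (\<Sum>k\<in>UNIV. z$k)" using simplex_nonneg[OF z(1)] by (intro member_le_sum) auto
  hence th: "0 < th" "th < 1" using False zi simplex_sum[OF z(1)] by (auto simp: th_def)
  define y where "y = (1/(1-th)) *\<^sub>R (z - th *\<^sub>R axis i 1)"
  have y: "y \<in> stdsimplex"
  proof (rule simplexI)
    fix k show "0 \<le> y$k" using th simplex_nonneg[OF z(1), of k]
      by (auto simp: y_def axis_def th_def)
  next
    have "(\<Sum>k\<in>UNIV. y$k) = (\<Sum>k\<in>UNIV. (z$k - th * (if k = i then 1 else 0)) / (1 - th))"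
      by (simp add: y_def axis_def)
    also have "\<dots> = (\<Sum>k\<in>UNIV. z$k - th * (if k = i then 1 else 0)) / (1 - th)"
      by (simp add: sum_divide_distrib)
    also have "(\<Sum>k\<in>UNIV. z$k - th * (if k = i then 1 else 0)) = (\<Sum>k\<in>UNIV. z$k) - th"
    proof -
      have "(\<Sum>k\<in>UNIV. th * (if k = i then 1 else 0)) = th"
        by (simp add: if_distrib[of "(*) th"] cong: if_cong)
      thus ?thesis by (simp only: sum_subtractf)
    qed
    finally have "(\<Sum>k\<in>UNIV. y$k) = (1/(1-th)) * ((\<Sum>k\<in>UNIV. z$k) - th)" by simp
    also have "\<dots> = 1" using th simplex_sum[OF z(1)] by simp
    finally show "(\<Sum>k\<in>UNIV. y$k) = 1" .
  qed
  define r where "r = B *v y"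
  have r: "r \<in> mconv B" using y by (auto simp: mconv_def r_def)
  have yy: "(1 - th) *\<^sub>R y = z - th *\<^sub>R axis i 1" using th by (simp add: y_def)
  have "(1 - th) *\<^sub>R r = B *v ((1 - th) *\<^sub>R y)" by (simp add: r_def matrix_vector_mult_scaleR)
  also have "\<dots> = B *v (z - th *\<^sub>R axis i 1)" by (simp only: yy)
  also have "\<dots> = B *v z - th *\<^sub>R column i B"
    by (simp add: matrix_vector_mult_diff_distrib matrix_vector_mult_scaleR matrix_vector_mult_basis)
  finally have "(1 - th) *\<^sub>R r = B *v z - th *\<^sub>R column i B" .
  hence p: "B *v z = (1 - th) *\<^sub>R r + th *\<^sub>R column i B" by (simp add: algebra_simps)
  show ?thesis
  proof (cases "r = column i B")
    case True
    then have "B *v z = column i B" using p by (simp add: scaleR_left_distrib[symmetric])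
    thus ?thesis using z(2) by simp
  next
    case False
    have "B *v z \<in> open_segment r (column i B)" using False th p by (auto simp: in_segment)
    from face_ofD[OF F this r column_in_mconv z(2)] show ?thesis by simp
  qed
qed



lemma sum_if_in:
  fixes f :: "'a \<Rightarrow> 'b::comm_monoid_add"
  assumes "finite U" "J \<subseteq> U"
  shows "(\<Sum>i\<in>U. if i \<in> J then f i else 0) = sum f J"
proof -
  have "(\<Sum>i\<in>U. if i \<in> J then f i else 0) = (\<Sum>i\<in>J. if i \<in> J then f i else 0)"
    using assms by (intro sum.mono_neutral_right) auto
  thus ?thesis by simp
qed

lemma hull_rep:
  fixes B :: "real^'n^'m"
  assumes C: "C \<subseteq> columns B" and q: "q \<in> convex hull C"
  shows "\<exists>y\<in>stdsimplex. B *v y = q \<and> (\<forall>i. 0 < y$i \<longrightarrow> column i B \<in> C)"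
proof -
  have fC: "finite C" using C finite_columns by (rule finite_subset)
  obtain u where u: "\<forall>c\<in>C. 0 \<le> u c" "sum u C = 1" "(\<Sum>c\<in>C. u c *\<^sub>R c) = q"
  proof -
    have "q \<in> {y. \<exists>u. (\<forall>x\<in>C. 0 \<le> u x) \<and> sum u C = 1 \<and> (\<Sum>x\<in>C. u x *\<^sub>R x) = y}"
      using q convex_hull_finite[OF fC] by simp
    thus ?thesis using that by blast
  qed
  define rep where "rep c = (SOME i. column i B = c)" for c
  have rep: "column (rep c) B = c" if "c \<in> C" for c
  proof -
    have "c \<in> range (\<lambda>i. column i B)" using C that by (auto simp: columns_range)
    then obtain i where "column i B = c" by auto
    thus ?thesis unfolding rep_def by (rule someI)
  qed
  define J where "J = {i. rep (column i B) = i \<and> column i B \<in> C}"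
  define y :: "real^'n" where "y = (\<chi> i. if i \<in> J then u (column i B) else 0)"
  have inj: "inj_on (\<lambda>i. column i B) J"
  proof (rule inj_onI)
    fix i j assume "i \<in> J" "j \<in> J" "column i B = column j B"
    then have "rep (column i B) = i" "rep (column j B) = j" "column i B = column j B"
      unfolding J_def by blast+
    thus "i = j" by metis
  qed
  have img: "(\<lambda>i. column i B) ` J = C"
  proof
    show "(\<lambda>i. column i B) ` J \<subseteq> C" unfolding J_def by blast
    show "C \<subseteq> (\<lambda>i. column i B) ` J"
    proof
      fix c assume c: "c \<in> C"
      have "rep c \<in> J" unfolding J_def using rep[OF c] c by simp
      thus "c \<in> (\<lambda>i. column i B) ` J" using rep[OF c] by (metis image_eqI)
    qed
  qed
  have JC: "column i B \<in> C" if "i \<in> J" for i using that unfolding J_def by blast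
  have sumJ: "(\<Sum>i\<in>J. g (column i B)) = (\<Sum>c\<in>C. g c)" for g :: "real^'m \<Rightarrow> 'b::comm_monoid_add"
    using sum.reindex[OF inj, of g] img by simp
  have "B *v y = (\<Sum>i\<in>UNIV. (if i \<in> J then u (column i B) *\<^sub>R column i B else 0))"
    unfolding Bsum by (intro sum.cong refl) (simp add: y_def)
  also have "\<dots> = (\<Sum>i\<in>J. u (column i B) *\<^sub>R column i B)" by (rule sum_if_in) auto
  also have "\<dots> = q" using sumJ[of "\<lambda>c. u c *\<^sub>R c"] u(3) by simp
  finally have By: "B *v y = q" .
  have ys: "y \<in> stdsimplex"
  proof (rule simplexI)
    fix i show "0 \<le> y$i" using u(1) JC[of i] by (simp add: y_def)
  next
    have "(\<Sum>i\<in>UNIV. y$i) = (\<Sum>i\<in>UNIV. if i \<in> J then u (column i B) else 0)" by (simp add: y_def)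
    also have "\<dots> = (\<Sum>i\<in>J. u (column i B))" by (rule sum_if_in) auto
    also have "\<dots> = 1" using sumJ[of u] u(2) by simp
    finally show "(\<Sum>i\<in>UNIV. y$i) = 1" .
  qed
  have "\<forall>i. 0 < y$i \<longrightarrow> column i B \<in> C"
  proof (intro allI impI)
    fix i assume "0 < y$i"
    hence "i \<in> J" by (simp add: y_def split: if_splits)
    thus "column i B \<in> C" by (rule JC)
  qed
  thus ?thesis using ys By by blast
qed



lemma facial_lower:
  fixes B :: "real^'n^'m"
  assumes w: "w \<in> mconv B" and x: "x \<in> stdsimplex" "x \<notin> Zset B w"
  shows "\<exists>F. F face_of mconv B \<and> F \<noteq> {} \<and> F \<noteq> mconv B \<and>
     setdist F (convex hull {c \<in> columns B. c \<notin> F}) * l1dist x (Zset B w) \<le> 2 * norm (B *v x - w)"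
proof -
  from R_elem[OF w x] obtain z t a b where e: "z \<in> Zset B w"
     "\<forall>z'\<in>Zset B w. l1norm (x - z) \<le> l1norm (x - z')"
     "l1dist x (Zset B w) = 2 * t" "l1norm (x - z) = 2 * t" "0 < t" "a \<in> stdsimplex" "b \<in> stdsimplex"
     "x - z = t *\<^sub>R (a - b)" "B *v x - w = t *\<^sub>R (B *v a - B *v b)" "\<forall>i. t * a$i \<le> x$i"
    by blast
  define p where "p = B *v b"
  have pP: "p \<in> mconv B" unfolding p_def mconv_def using e(7) by blast
  define F where "F = {y \<in> mconv B. \<exists>d>0. p + d *\<^sub>R (p - y) \<in> mconv B}"
  have Ff: "F face_of mconv B" unfolding F_def by (rule ext_face[OF convex_mconv pP])
  have pF: "p \<in> F" unfolding F_def using pP by (auto intro: exI[of _ 1])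
  have notF: "column i B \<notin> F" if ai: "0 < a$i" for i
  proof
    assume "column i B \<in> F"
    then obtain d where d: "0 < d" "p + d *\<^sub>R (p - column i B) \<in> mconv B" unfolding F_def by blast
    then obtain y where y1: "y \<in> stdsimplex" and y2: "p + d *\<^sub>R (p - column i B) = B *v y"
      unfolding mconv_def by blast
    have y: "y \<in> stdsimplex" "B *v y = p + d *\<^sub>R (p - column i B)" using y1 y2 by simp_all
    define bt where "bt = (1/(1+d)) *\<^sub>R (y + d *\<^sub>R axis i 1)"
    have bt: "bt \<in> stdsimplex"
    proof (rule simplexI)
      fix k show "0 \<le> bt$k" using d simplex_nonneg[OF y(1), of k] by (simp add: bt_def axis_def)
    next
      have s1: "(\<Sum>k\<in>UNIV. d * (if k = i then 1 else 0)) = d"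
        by (simp add: if_distrib[of "(*) d"] cong: if_cong)
      have "(\<Sum>k\<in>UNIV. bt$k) = (\<Sum>k\<in>UNIV. (y$k + d * (if k = i then 1 else 0)) / (1 + d))"
        by (simp add: bt_def axis_def)
      also have "\<dots> = (\<Sum>k\<in>UNIV. y$k + d * (if k = i then 1 else 0)) / (1 + d)"
        by (simp add: sum_divide_distrib)
      also have "(\<Sum>k\<in>UNIV. y$k + d * (if k = i then 1 else 0)) = (\<Sum>k\<in>UNIV. y$k) + d"
        by (simp only: sum.distrib s1)
      finally have "(\<Sum>k\<in>UNIV. bt$k) = (1/(1+d)) * ((\<Sum>k\<in>UNIV. y$k) + d)" by simp
      also have "\<dots> = 1" using d simplex_sum[OF y(1)] by simp
      finally show "(\<Sum>k\<in>UNIV. bt$k) = 1" .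
    qed
    have "B *v bt = (1/(1+d)) *\<^sub>R (B *v y + d *\<^sub>R column i B)"
      by (simp add: bt_def matrix_vector_mult_scaleR matrix_vector_right_distrib matrix_vector_mult_basis)
    also have "B *v y + d *\<^sub>R column i B = (1 + d) *\<^sub>R p" by (simp add: y(2) algebra_simps)
    finally have Bbt: "B *v bt = p" using d by simp
    have bti: "0 < bt$i" using d simplex_nonneg[OF y(1), of i] by (simp add: bt_def axis_def)
    define z' where "z' = x - t *\<^sub>R (a - bt)"
    have z'Z: "z' \<in> Zset B w"
    proof -
      have "z' \<in> stdsimplex"
      proof (rule simplexI)
        fix k have "t * a$k \<le> x$k" using e(10) by blast
        moreover have "0 \<le> t * bt$k" using e(5) simplex_nonneg[OF bt, of k] by simp
        ultimately show "0 \<le> z'$k" by (simp add: z'_def algebra_simps)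
      next
        have "(\<Sum>k\<in>UNIV. z'$k) = (\<Sum>k\<in>UNIV. x$k) - t * ((\<Sum>k\<in>UNIV. a$k) - (\<Sum>k\<in>UNIV. bt$k))"
          by (simp add: z'_def sum_subtractf sum_distrib_left[symmetric] right_diff_distrib[symmetric])
        thus "(\<Sum>k\<in>UNIV. z'$k) = 1" using simplex_sum[OF x(1)] simplex_sum[OF e(6)] simplex_sum[OF bt] by simp
      qed
      moreover have "B *v z' = w"
      proof -
        have "B *v z' = B *v x - t *\<^sub>R (B *v a - B *v bt)"
          by (simp add: z'_def matrix_vector_mult_diff_distrib matrix_vector_mult_scaleR)
        also have "\<dots> = B *v x - (B *v x - w)" by (simp only: Bbt e(9) p_def)
        finally show ?thesis by simp
      qed
      ultimately show ?thesis by (simp add: Zset_def)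
    qed
    have "l1norm (x - z') = (\<Sum>k\<in>UNIV. t * \<bar>a$k - bt$k\<bar>)"
      unfolding l1norm_def using e(5) by (simp add: z'_def abs_mult)
    also have "\<dots> < (\<Sum>k\<in>UNIV. t * (a$k + bt$k))"
    proof (rule sum_strict_mono_ex1)
      show "\<forall>k\<in>UNIV. t * \<bar>a$k - bt$k\<bar> \<le> t * (a$k + bt$k)"
      proof
        fix k
        have "\<bar>a$k - bt$k\<bar> \<le> a$k + bt$k"
          using simplex_nonneg[OF e(6), of k] simplex_nonneg[OF bt, of k] by (simp add: abs_le_iff)
        thus "t * \<bar>a$k - bt$k\<bar> \<le> t * (a$k + bt$k)" using e(5) by (simp add: mult_left_mono)
      qed
      show "\<exists>k\<in>UNIV. t * \<bar>a$k - bt$k\<bar> < t * (a$k + bt$k)"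
        using e(5) ai bti by (intro bexI[of _ i]) auto
    qed simp
    also have "\<dots> = 2 * t"
      using simplex_sum[OF e(6)] simplex_sum[OF bt] by (simp add: sum_distrib_left[symmetric] sum.distrib)
    finally have "l1norm (x - z') < l1norm (x - z)" using e(4) by simp
    with e(2) z'Z show False by fastforce
  qed
  define C where "C = {c \<in> columns B. c \<notin> F}"
  define I where "I = {i. 0 < a$i}"
  have a0: "a$i = 0" if "i \<notin> I" for i using that simplex_nonneg[OF e(6), of i] by (simp add: I_def)
  have sumI: "(\<Sum>i\<in>I. a$i) = 1"
  proof -
    have "(\<Sum>i\<in>I. a$i) = (\<Sum>i\<in>UNIV. a$i)" using a0 by (intro sum.mono_neutral_left) auto
    thus ?thesis using simplex_sum[OF e(6)] by simp
  qed
  have aC: "B *v a \<in> convex hull C"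
  proof -
    have "B *v a = (\<Sum>i\<in>I. a$i *\<^sub>R column i B)"
      unfolding Bsum using a0 by (intro sum.mono_neutral_right) auto
    also have "\<dots> \<in> convex hull C"
    proof (rule convex_sum)
      show "\<And>i. i \<in> I \<Longrightarrow> column i B \<in> convex hull C"
        using notF by (intro hull_inc) (auto simp: C_def I_def columns_range)
    qed (use sumI in \<open>auto simp: I_def\<close>)
    finally show ?thesis .
  qed
  obtain i where "0 < a$i"
  proof (rule ccontr)
    assume "\<not> thesis"
    have "\<forall>i. a$i = 0"
    proof
      fix i
      have "\<not> 0 < a$i" using that \<open>\<not> thesis\<close> by blast
      thus "a$i = 0" using simplex_nonneg[OF e(6), of i] by simp
    qed
    thus False using simplex_sum[OF e(6)] by simp
  qed
  hence FnP: "F \<noteq> mconv B" using notF[of i] column_in_mconv[of i B] by blast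
  have "setdist F (convex hull C) \<le> dist p (B *v a)" by (rule setdist_le_dist[OF pF aC])
  also have "\<dots> = norm (B *v a - B *v b)" by (simp add: p_def dist_norm norm_minus_commute)
  finally have sd: "setdist F (convex hull C) \<le> norm (B *v a - B *v b)" .
  have "setdist F (convex hull C) * l1dist x (Zset B w) \<le> norm (B *v a - B *v b) * (2 * t)"
    using sd e(3,5) by (simp add: mult_right_mono)
  also have "\<dots> = 2 * norm (B *v x - w)" using e(5,9) by simp
  finally show ?thesis using Ff pF FnP unfolding C_def by blast
qed

lemma facial_upper:
  fixes B :: "real^'n^'m"
  assumes F: "F face_of mconv B" "F \<noteq> {}" "F \<noteq> mconv B"
  shows "\<exists>r\<in>Rset B. 4 * r = (setdist F (convex hull {c \<in> columns B. c \<notin> F}))^2"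
proof -
  define C where "C = {c \<in> columns B. c \<notin> F}"
  have FP: "F \<subseteq> mconv B" using F(1) by (rule face_of_imp_subset)
  have Cne: "C \<noteq> {}"
  proof
    assume "C = {}"
    hence "columns B \<subseteq> F" unfolding C_def by blast
    hence "convex hull (columns B) \<subseteq> F" using face_of_imp_convex[OF F(1)] by (rule hull_minimal)
    hence "mconv B \<subseteq> F" by (simp add: mconv_hull)
    thus False using FP F(3) by blast
  qed
  have fC: "finite C" unfolding C_def using finite_columns[of B] by (rule rev_finite_subset) auto
  have cC: "compact (convex hull C)" using fC by (rule finite_imp_compact_convex_hull)
  have clF: "closed F" using face_of_imp_closed[OF convex_mconv compact_imp_closed[OF compact_mconv] F(1)] .
  have "convex hull C \<noteq> {}" using Cne by simp
  from setdist_compact_closed[OF cC clF this F(2)] obtain q p where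
    qp: "q \<in> convex hull C" "p \<in> F" "dist q p = setdist (convex hull C) F" by blast
  have sd: "setdist F (convex hull C) = norm (q - p)" using qp(3) by (simp add: setdist_sym dist_norm)
  have "C \<subseteq> columns B" unfolding C_def by blast
  from hull_rep[OF this qp(1)] obtain y where
    y: "y \<in> stdsimplex" "B *v y = q" "\<forall>i. 0 < y$i \<longrightarrow> column i B \<in> C" by blast
  have pP: "p \<in> mconv B" using FP qp(2) by blast
  have supp: "column i B \<in> F" if "z \<in> Zset B p" "0 < z$i" for z i
  proof -
    have "z \<in> stdsimplex" "B *v z = p" using that(1) by (auto simp: Zset_def)
    thus ?thesis using face_support[OF F(1) _ _ that(2)] qp(2) by simp
  qed
  have disj: "y$i = 0 \<or> z$i = 0" if "z \<in> Zset B p" for z i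
  proof (rule ccontr)
    assume "\<not> (y$i = 0 \<or> z$i = 0)"
    moreover have "0 \<le> y$i" "0 \<le> z$i" using y(1) that by (auto simp: Zset_def simplex_nonneg)
    ultimately have "0 < y$i" "0 < z$i" by auto
    hence "column i B \<in> C" "column i B \<in> F" using y(3) supp[OF that] by auto
    thus False unfolding C_def by blast
  qed
  have l1: "l1norm (y - z) = 2" if "z \<in> Zset B p" for z
  proof -
    have zs: "z \<in> stdsimplex" using that by (simp add: Zset_def)
    have "l1norm (y - z) = (\<Sum>i\<in>UNIV. y$i + z$i)" unfolding l1norm_def
    proof (intro sum.cong refl)
      fix i
      show "\<bar>(y - z)$i\<bar> = y$i + z$i"
        using disj[OF that, of i] simplex_nonneg[OF y(1), of i] simplex_nonneg[OF zs, of i] by auto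
    qed
    also have "\<dots> = 2" using simplex_sum[OF y(1)] simplex_sum[OF zs] by (simp add: sum.distrib)
    finally show ?thesis .
  qed
  have yZ: "y \<notin> Zset B p"
  proof
    assume yz: "y \<in> Zset B p"
    have "l1norm (y - y) = 2" by (rule l1[OF yz])
    thus False by (simp add: l1norm_def)
  qed
  obtain z0 where z0: "z0 \<in> Zset B p" "l1dist y (Zset B p) = l1norm (y - z0)"
    using l1dist_attain[OF pP] by blast
  have ld: "l1dist y (Zset B p) = 2" using z0 l1 by simp
  define r where "r = (norm (B *v y - p))^2 / (l1dist y (Zset B p))^2"
  have rR: "r \<in> Rset B" unfolding Rset_def r_def using pP y(1) yZ by blast
  have "4 * r = (norm (q - p))^2" by (simp add: r_def ld y(2))
  thus ?thesis using rR sd unfolding C_def by metis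
qed

lemma Inf_R:
  fixes B :: "real^'n^'m"
  assumes "\<exists>i j. column i B \<noteq> column j B"
  shows "Inf (Rset B) = (facial_distance B)^2 / 4"
proof -
  define FS where "FS = {setdist F (convex hull {c \<in> columns B. c \<notin> F}) | F. F face_of mconv B \<and> F \<noteq> {} \<and> F \<noteq> mconv B}"
  have fd: "facial_distance B = Inf FS" by (simp add: facial_distance_def FS_def)
  have r0: "(mdiam B)^2 / 4 \<in> Rset B" by (rule R_attain[OF assms])
  have Rne: "Rset B \<noteq> {}" using r0 by blast
  have Rbdd: "bdd_below (Rset B)" using R_nonneg unfolding bdd_below_def by blast
  have FSnn: "0 \<le> s" if "s \<in> FS" for s using that by (auto simp: FS_def setdist_pos_le)
  have FSbdd: "bdd_below FS" using FSnn unfolding bdd_below_def by blast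
  obtain w x where wx: "w \<in> mconv B" "x \<in> stdsimplex" "x \<notin> Zset B w"
    using r0 unfolding Rset_def by blast
  from facial_lower[OF wx] obtain F0 where "F0 face_of mconv B" "F0 \<noteq> {}" "F0 \<noteq> mconv B" by blast
  hence FSne: "FS \<noteq> {}" unfolding FS_def by blast
  have Phinn: "0 \<le> Inf FS" using FSne FSnn by (intro cInf_greatest) auto
  have lower: "(Inf FS)^2 / 4 \<le> r" if rin: "r \<in> Rset B" for r
  proof -
    obtain w x where wx: "w \<in> mconv B" "x \<in> stdsimplex" "x \<notin> Zset B w"
      and r: "r = (norm (B *v x - w))^2 / (l1dist x (Zset B w))^2"
      using rin unfolding Rset_def by blast
    from R_elem[OF wx] obtain t where lt: "l1dist x (Zset B w) = 2 * t" "0 < t" by blast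
    from facial_lower[OF wx] obtain F where
      F: "F face_of mconv B" "F \<noteq> {}" "F \<noteq> mconv B"
         "setdist F (convex hull {c \<in> columns B. c \<notin> F}) * l1dist x (Zset B w) \<le> 2 * norm (B *v x - w)"
      by blast
    have "setdist F (convex hull {c \<in> columns B. c \<notin> F}) \<in> FS" unfolding FS_def using F(1-3) by blast
    hence "Inf FS \<le> setdist F (convex hull {c \<in> columns B. c \<notin> F})" using FSbdd by (rule cInf_lower)
    hence "Inf FS * l1dist x (Zset B w) \<le> 2 * norm (B *v x - w)"
      using F(4) lt by (smt (verit) mult_right_mono)
    hence "(Inf FS * l1dist x (Zset B w))^2 \<le> (2 * norm (B *v x - w))^2"
      using Phinn lt by (intro power_mono) auto
    hence "(Inf FS)^2 * (l1dist x (Zset B w))^2 \<le> 4 * (norm (B *v x - w))^2"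
      by (simp add: power_mult_distrib)
    thus ?thesis using lt by (simp add: r field_simps)
  qed
  have m1: "(Inf FS)^2 / 4 \<le> Inf (Rset B)" using Rne lower by (intro cInf_greatest) auto
  define m where "m = Inf (Rset B)"
  have mnn: "0 \<le> m" unfolding m_def using Rne R_nonneg by (intro cInf_greatest) auto
  have "2 * sqrt m \<le> s" if sin: "s \<in> FS" for s
  proof -
    obtain F where F: "F face_of mconv B" "F \<noteq> {}" "F \<noteq> mconv B"
      and s: "s = setdist F (convex hull {c \<in> columns B. c \<notin> F})" using sin unfolding FS_def by blast
    from facial_upper[OF F] obtain r where r: "r \<in> Rset B" "4 * r = s^2" using s by blast
    have "m \<le> r" unfolding m_def using r(1) Rbdd by (rule cInf_lower)
    hence "4 * m \<le> s^2" using r(2) by simp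
    hence "sqrt (4 * m) \<le> sqrt (s^2)" by (rule real_sqrt_le_mono)
    also have "sqrt (s^2) = s" using FSnn[OF sin] by simp
    also have "sqrt (4 * m) = 2 * sqrt m" by (simp add: real_sqrt_mult)
    finally show ?thesis .
  qed
  hence "2 * sqrt m \<le> Inf FS" using FSne by (intro cInf_greatest) auto
  hence "(2 * sqrt m)^2 \<le> (Inf FS)^2" using mnn by (intro power_mono) auto
  hence "m \<le> (Inf FS)^2 / 4" using mnn by (simp add: power_mult_distrib)
  with m1 show ?thesis by (simp add: fd m_def)
qed



lemma fderiv_quad:
  fixes Q :: "real^'m^'m" and b :: "real^'m"
  shows "((\<lambda>u. (1/2) * ((Q *v u) \<bullet> u) + b \<bullet> u) has_derivative
     (\<lambda>h. (1/2) * ((Q *v h) \<bullet> u + (Q *v u) \<bullet> h) + b \<bullet> h)) (at u)"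
proof -
  have lin: "((\<lambda>u. Q *v u) has_derivative (\<lambda>h. Q *v h)) (at u)"
    by (rule bounded_linear_imp_has_derivative) simp
  show ?thesis
    by (auto intro!: derivative_eq_intros lin)
qed

theorem corollary1:
  fixes Q :: "real^'m^'m" and b :: "real^'m" and A :: "real^'n^'m"
  assumes "sym_pos_def Q"
    and "\<exists>i j. column i A \<noteq> column j A"
  defines "f \<equiv> (\<lambda>u. (1/2) * ((Q *v u) \<bullet> u) + b \<bullet> u)"
  shows "Lrel f A = (mdiam (msqrt Q ** A))^2 / 4
    \<and> murel f A = (facial_distance (msqrt Q ** A))^2 / 4
    \<and> Lrel f A / murel f A = (mdiam (msqrt Q ** A))^2 / (facial_distance (msqrt Q ** A))^2"
proof -
  define S where "S = msqrt Q"
  define B where "B = S ** A"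
  have Sp: "transpose S = S" "S ** S = Q" using msqrt_props[OF assms(1)] by (simp_all add: S_def)
  have pos: "\<And>x. x \<noteq> 0 \<Longrightarrow> (Q *v x) \<bullet> x > 0" using assms(1) by (auto simp: sym_pos_def_def)
  have SS: "S *v (S *v v) = Q *v v" for v using Sp(2) by (simp add: matrix_vector_mul_assoc)
  have Sinj: "v = 0" if "S *v v = 0" for v
  proof (rule ccontr)
    assume "v \<noteq> 0"
    hence "(Q *v v) \<bullet> v > 0" by (rule pos)
    moreover have "Q *v v = 0" using SS[of v] that by simp
    ultimately show False by simp
  qed
  have Seq: "S *v v1 = S *v v2 \<longleftrightarrow> v1 = v2" for v1 v2
  proof
    assume "S *v v1 = S *v v2"
    hence "S *v (v1 - v2) = 0" by (simp add: matrix_vector_mult_diff_distrib)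
    thus "v1 = v2" using Sinj by fastforce
  qed simp
  have colB: "column i B = S *v column i A" for i
    by (metis B_def matrix_vector_mul_assoc matrix_vector_mult_basis)
  have dist: "\<exists>i j. column i B \<noteq> column j B" using assms(2) by (auto simp: colB Seq)
  have BS: "B *v x = S *v (A *v x)" for x by (simp add: B_def matrix_vector_mul_assoc)
  have fd: "frechet_derivative f (at u) = (\<lambda>h. (1/2) * ((Q *v h) \<bullet> u + (Q *v u) \<bullet> h) + b \<bullet> h)" for u
    unfolding f_def using fderiv_quad[of Q b u] by (rule frechet_derivative_at[symmetric])
  have breg: "2 * (f y - f u - frechet_derivative f (at u) (y - u)) = (norm (S *v (y - u)))^2" for u y
  proof -
    have "(norm (S *v (y - u)))^2 = (S *v (y - u)) \<bullet> (S *v (y - u))" by (simp add: power2_norm_eq_inner)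
    also have "\<dots> = (S *v (S *v (y - u))) \<bullet> (y - u)" using symdot[OF Sp(1), of "S *v (y - u)" "y - u"] by simp
    also have "\<dots> = (Q *v (y - u)) \<bullet> (y - u)" by (simp add: SS)
    finally show ?thesis unfolding fd
      by (simp add: f_def matrix_vector_mult_diff_distrib inner_diff_left inner_diff_right algebra_simps)
  qed
  have Zeq: "Zset A u = Zset B (S *v u)" for u by (simp add: Zset_def BS Seq)
  have mB: "S *v u \<in> mconv B" if "u \<in> mconv A" for u
    using that unfolding mconv_def by (auto simp: BS)
  have RR: "ratio_set f A = Rset B"
  proof
    show "ratio_set f A \<subseteq> Rset B"
    proof
      fix r assume "r \<in> ratio_set f A"
      then obtain u x where ux: "u \<in> mconv A" "x \<in> stdsimplex" "x \<notin> Zset A u"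
        and r: "r = 2 * (f (A *v x) - f u - frechet_derivative f (at u) (A *v x - u)) / (l1dist x (Zset A u))^2"
        unfolding ratio_set_def by blast
      have "r = (norm (S *v (A *v x - u)))^2 / (l1dist x (Zset B (S *v u)))^2"
        unfolding r breg Zeq ..
      also have "S *v (A *v x - u) = B *v x - S *v u" by (simp add: BS matrix_vector_mult_diff_distrib)
      finally have "r = (norm (B *v x - S *v u))^2 / (l1dist x (Zset B (S *v u)))^2" .
      moreover have "x \<notin> Zset B (S *v u)" using ux(3) by (simp add: Zeq)
      ultimately show "r \<in> Rset B" unfolding Rset_def using mB[OF ux(1)] ux(2) by blast
    qed
  next
    show "Rset B \<subseteq> ratio_set f A"
    proof
      fix r assume "r \<in> Rset B"
      then obtain w x where wx: "w \<in> mconv B" "x \<in> stdsimplex" "x \<notin> Zset B w"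
        and r: "r = (norm (B *v x - w))^2 / (l1dist x (Zset B w))^2"
        unfolding Rset_def by blast
      obtain y where y: "y \<in> stdsimplex" "w = B *v y" using wx(1) unfolding mconv_def by blast
      define u where "u = A *v y"
      have u: "u \<in> mconv A" using y(1) unfolding mconv_def u_def by blast
      have wS: "w = S *v u" by (simp add: y(2) u_def BS)
      have "B *v x - w = S *v (A *v x - u)" by (simp add: BS wS matrix_vector_mult_diff_distrib)
      hence "r = (norm (S *v (A *v x - u)))^2 / (l1dist x (Zset B (S *v u)))^2" by (simp add: r wS)
      also have "\<dots> = 2 * (f (A *v x) - f u - frechet_derivative f (at u) (A *v x - u)) / (l1dist x (Zset A u))^2"
        unfolding breg Zeq ..
      finally have "r = 2 * (f (A *v x) - f u - frechet_derivative f (at u) (A *v x - u)) / (l1dist x (Zset A u))^2" .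
      moreover have "x \<notin> Zset A u" using wx(3) by (simp add: Zeq wS)
      ultimately show "r \<in> ratio_set f A" unfolding ratio_set_def using u wx(2) by blast
    qed
  qed
  have L: "Lrel f A = (mdiam B)^2 / 4" by (simp add: Lrel_def RR Sup_R[OF dist])
  have M: "murel f A = (facial_distance B)^2 / 4" by (simp add: murel_def RR Inf_R[OF dist])
  have L': "Lrel f A = (mdiam (msqrt Q ** A))^2 / 4" using L by (simp add: B_def S_def)
  have M': "murel f A = (facial_distance (msqrt Q ** A))^2 / 4" using M by (simp add: B_def S_def)
  have "Lrel f A / murel f A = ((mdiam (msqrt Q ** A))^2 / 4) / ((facial_distance (msqrt Q ** A))^2 / 4)"
    by (simp only: L' M')
  also have "\<dots> = (mdiam (msqrt Q ** A))^2 / (facial_distance (msqrt Q ** A))^2" by simp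
  finally show ?thesis using L' M' by blast
qed


end
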